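(* Let $D_x$ be a distribution over features $\mathcal{X}$, let $\alpha>0$, and let $k\ge1$ be odd. Let the label distribution be $D^\alpha_y=1-2\,\mathrm{Bernoulli}(\alpha)$ (so $y=-1$ with probability $\alpha$ and $y=1$ otherwise), and let $D=D_x\otimes D^\alpha_y$ be the joint distribution with independent features and labels. Let $h:\mathcal{X}\to\{-1,1\}$ be the $k$-nearest-neighbors classifier trained on $S\sim D^n$ with $n\ge k$, and let $x\in\mathcal{X}$. Then $$\mathbb{E}_{S\sim D^n}[h(x)]=-1+2\phi_k(\alpha),\qquad \phi_k(\alpha)=\Pr\left(\mathrm{Binomial}(k,\alpha)\le\lfloor k/2\rfloor\right).$$
   Context: The $k$-nearest-neighbors classifier (with $k$ odd) trained on $S=\{(x_i,y_i)\}_{i=1}^n$ returns, for a query $x$, the majority label among the $k$ training points whose features are nearest to $x$ (with respect to a metric on $\mathcal{X}$; the set of neighbors depends on the training features only). *)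

theory Defs
  imports "HOL-Probability.Probability"
begin

definition knn_selection ::
  "nat \<Rightarrow> nat \<Rightarrow> ((nat \<Rightarrow> 'a::metric_space) \<Rightarrow> 'a \<Rightarrow> nat set) \<Rightarrow> bool" where
  "knn_selection n k N \<longleftrightarrow>
     (\<forall>xs x. N xs x \<subseteq> {..<n} \<and> card (N xs x) = k \<and>
        (\<forall>i\<in>N xs x. \<forall>j\<in>{..<n} - N xs x. dist (xs i) x \<le> dist (xs j) x))"

definition knn_classifier ::
  "((nat \<Rightarrow> 'a) \<Rightarrow> 'a \<Rightarrow> nat set) \<Rightarrow> (nat \<Rightarrow> 'a \<times> real) \<Rightarrow> 'a \<Rightarrow> real" where
  "knn_classifier N S x =
     (if (\<Sum>i\<in>N (\<lambda>i. fst (S i)) x. snd (S i)) > 0 then 1 else -1)"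

definition label_pmf :: "real \<Rightarrow> real pmf" where
  "label_pmf \<alpha> = map_pmf (\<lambda>b. if b then -1 else 1) (bernoulli_pmf \<alpha>)"

definition phi :: "nat \<Rightarrow> real \<Rightarrow> real" where
  "phi k \<alpha> = measure_pmf.prob (binomial_pmf k \<alpha>) {..k div 2}"

end

theory Submission
  imports Defs
begin

lemma PiM_pair_split:
  fixes M :: "'a measure" and L :: "'b measure" and I :: "'i set"
  assumes fin: "finite I" and pM: "prob_space M" and pL: "prob_space L"
  shows "distr (PiM I (\<lambda>_. M \<Otimes>\<^sub>M L)) (PiM I (\<lambda>_. M) \<Otimes>\<^sub>M PiM I (\<lambda>_. L))
           (\<lambda>S. (\<lambda>i\<in>I. fst (S i), \<lambda>i\<in>I. snd (S i))) = PiM I (\<lambda>_. M) \<Otimes>\<^sub>M PiM I (\<lambda>_. L)"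
proof -
  interpret M: prob_space M by fact
  interpret L: prob_space L by fact
  interpret PML0: prob_space "M \<Otimes>\<^sub>M L" by (rule prob_space_pair) (use pM pL in auto)
  interpret PM: prob_space "PiM I (\<lambda>_. M)" using pM by (intro prob_space_PiM)
  interpret PL: prob_space "PiM I (\<lambda>_. L)" using pL by (intro prob_space_PiM)
  interpret PML2: prob_space "PiM I (\<lambda>_. M \<Otimes>\<^sub>M L)" using PML0.prob_space_axioms by (intro prob_space_PiM)
  interpret S1: product_sigma_finite "\<lambda>_::'i. M \<Otimes>\<^sub>M L" by unfold_locales
  interpret S2: product_sigma_finite "\<lambda>_::'i. M" by unfold_locales
  interpret S3: product_sigma_finite "\<lambda>_::'i. L" by unfold_locales
  let ?spl = "\<lambda>S. (\<lambda>i\<in>I. fst (S i), \<lambda>i\<in>I. snd (S i))"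
  let ?EA = "prod_algebra I (\<lambda>_. M)"
  let ?EB = "prod_algebra I (\<lambda>_. L)"
  let ?E = "{a \<times> b | a b. a \<in> ?EA \<and> b \<in> ?EB}"
  let ?\<Omega> = "space (PiM I (\<lambda>_. M)) \<times> space (PiM I (\<lambda>_. L))"
  have spl_meas: "?spl \<in> measurable (PiM I (\<lambda>_. M \<Otimes>\<^sub>M L)) (PiM I (\<lambda>_. M) \<Otimes>\<^sub>M PiM I (\<lambda>_. L))"
  proof -
    have m1: "(\<lambda>S. fst (S i)) \<in> measurable (PiM I (\<lambda>_. M \<Otimes>\<^sub>M L)) M" if "i \<in> I" for i
      using measurable_component_singleton[OF that, of "\<lambda>_. M \<Otimes>\<^sub>M L"]
      by (rule measurable_compose) simp
    have m2: "(\<lambda>S. snd (S i)) \<in> measurable (PiM I (\<lambda>_. M \<Otimes>\<^sub>M L)) L" if "i \<in> I" for i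
      using measurable_component_singleton[OF that, of "\<lambda>_. M \<Otimes>\<^sub>M L"]
      by (rule measurable_compose) simp
    show ?thesis unfolding measurable_pair_iff
      by (auto simp: o_def intro!: measurable_restrict m1 m2)
  qed
  have EA: "?EA \<subseteq> Pow (space (PiM I (\<lambda>_. M)))" "sets (PiM I (\<lambda>_. M)) = sigma_sets (space (PiM I (\<lambda>_. M))) ?EA"
    using prod_algebra_sets_into_space[of I "\<lambda>_. M"] by (auto simp: sets_PiM space_PiM)
  have EB: "?EB \<subseteq> Pow (space (PiM I (\<lambda>_. L)))" "sets (PiM I (\<lambda>_. L)) = sigma_sets (space (PiM I (\<lambda>_. L))) ?EB"
    using prod_algebra_sets_into_space[of I "\<lambda>_. L"] by (auto simp: sets_PiM space_PiM)
  have CA: "space (PiM I (\<lambda>_. M)) \<in> ?EA"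
    unfolding space_PiM by (rule prod_algebraI_finite) (auto simp: fin)
  have CB: "space (PiM I (\<lambda>_. L)) \<in> ?EB"
    unfolding space_PiM by (rule prod_algebraI_finite) (auto simp: fin)
  have Esub: "?E \<subseteq> Pow ?\<Omega>" using EA(1) EB(1) by auto
  have sets_eq: "sets (PiM I (\<lambda>_. M) \<Otimes>\<^sub>M PiM I (\<lambda>_. L)) = sigma_sets ?\<Omega> ?E"
  proof -
    have "sets (PiM I (\<lambda>_. M) \<Otimes>\<^sub>M PiM I (\<lambda>_. L)) = sets (sigma ?\<Omega> ?E)"
      by (rule sets_pair_eq[where Ca="{space (PiM I (\<lambda>_. M))}" and Cb="{space (PiM I (\<lambda>_. L))}"])
         (use EA EB CA CB in auto)
    also have "\<dots> = sigma_sets ?\<Omega> ?E" using Esub by (rule sets_measure_of)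
    finally show ?thesis .
  qed
  show ?thesis
  proof (rule measure_eqI_generator_eq[where E="?E" and \<Omega>="?\<Omega>" and A="\<lambda>_. ?\<Omega>"])
    show "Int_stable ?E"
    proof (rule Int_stableI)
      fix X Y assume "X \<in> ?E" "Y \<in> ?E"
      then obtain a b a' b' where ab: "X = a \<times> b" "Y = a' \<times> b'" "a \<in> ?EA" "b \<in> ?EB" "a' \<in> ?EA" "b' \<in> ?EB"
        by blast
      have i1: "a \<inter> a' \<in> ?EA"
        using Int_stable_prod_algebra[of I "\<lambda>_. M", unfolded Int_stable_def] ab(3,5) by blast
      have i2: "b \<inter> b' \<in> ?EB"
        using Int_stable_prod_algebra[of I "\<lambda>_. L", unfolded Int_stable_def] ab(4,6) by blast
      have "X \<inter> Y = (a \<inter> a') \<times> (b \<inter> b')" using ab(1,2) by auto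
      then show "X \<inter> Y \<in> ?E" using i1 i2 by blast
    qed
    show "?E \<subseteq> Pow ?\<Omega>" by (fact Esub)
    show "sets (distr (PiM I (\<lambda>_. M \<Otimes>\<^sub>M L)) (PiM I (\<lambda>_. M) \<Otimes>\<^sub>M PiM I (\<lambda>_. L)) ?spl) = sigma_sets ?\<Omega> ?E"
      using sets_eq by simp
    show "sets (PiM I (\<lambda>_. M) \<Otimes>\<^sub>M PiM I (\<lambda>_. L)) = sigma_sets ?\<Omega> ?E" by (fact sets_eq)
    show "range (\<lambda>_. ?\<Omega>) \<subseteq> ?E" using CA CB by auto
    show "(\<Union>i. ?\<Omega>) = ?\<Omega>" by simp
    show "emeasure (distr (PiM I (\<lambda>_. M \<Otimes>\<^sub>M L)) (PiM I (\<lambda>_. M) \<Otimes>\<^sub>M PiM I (\<lambda>_. L)) ?spl) ?\<Omega> \<noteq> \<infinity>"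
      for i :: nat
      using PML2.emeasure_finite by (simp add: spl_meas emeasure_distr)
  next
    fix X assume "X \<in> ?E"
    then obtain a b where X: "X = a \<times> b" "a \<in> ?EA" "b \<in> ?EB" by blast
    obtain XA where XA: "a = PiE I XA" "XA \<in> (\<Pi> j\<in>I. sets M)"
      using X(2) unfolding prod_algebra_eq_finite[OF fin] by blast
    obtain XB where XB: "b = PiE I XB" "XB \<in> (\<Pi> j\<in>I. sets L)"
      using X(3) unfolding prod_algebra_eq_finite[OF fin] by blast
    have pre: "?spl -` (a \<times> b) \<inter> space (PiM I (\<lambda>_. M \<Otimes>\<^sub>M L)) = PiE I (\<lambda>i. XA i \<times> XB i)"
    proof (intro set_eqI iffI)
      fix S assume "S \<in> ?spl -` (a \<times> b) \<inter> space (PiM I (\<lambda>_. M \<Otimes>\<^sub>M L))"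
      then show "S \<in> PiE I (\<lambda>i. XA i \<times> XB i)"
        by (auto simp: XA(1) XB(1) space_PiM PiE_iff mem_Times_iff)
    next
      fix S assume S: "S \<in> PiE I (\<lambda>i. XA i \<times> XB i)"
      have "XA i \<times> XB i \<subseteq> space M \<times> space L" if "i \<in> I" for i
        using XA(2) XB(2) that sets.sets_into_space[of "XA i" M] sets.sets_into_space[of "XB i" L]
        by (auto simp: Pi_iff)
      then have "S \<in> space (PiM I (\<lambda>_. M \<Otimes>\<^sub>M L))"
        using S by (auto simp: space_PiM space_pair_measure PiE_iff)
      moreover have "?spl S \<in> a \<times> b"
        using S by (auto simp: XA(1) XB(1) PiE_iff mem_Times_iff)
      ultimately show "S \<in> ?spl -` (a \<times> b) \<inter> space (PiM I (\<lambda>_. M \<Otimes>\<^sub>M L))" by blast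
    qed
    have "emeasure (distr (PiM I (\<lambda>_. M \<Otimes>\<^sub>M L)) (PiM I (\<lambda>_. M) \<Otimes>\<^sub>M PiM I (\<lambda>_. L)) ?spl) X
        = emeasure (PiM I (\<lambda>_. M \<Otimes>\<^sub>M L)) (PiE I (\<lambda>i. XA i \<times> XB i))"
      using X(1) pre spl_meas EA EB X
      by (subst emeasure_distr) (auto)
    also have "\<dots> = (\<Prod>i\<in>I. emeasure (M \<Otimes>\<^sub>M L) (XA i \<times> XB i))"
      using XA XB by (subst S1.emeasure_PiM) (auto simp: fin)
    also have "\<dots> = (\<Prod>i\<in>I. emeasure M (XA i) * emeasure L (XB i))"
      using XA XB by (intro prod.cong refl L.emeasure_pair_measure_Times) auto
    also have "\<dots> = emeasure (PiM I (\<lambda>_. M)) a * emeasure (PiM I (\<lambda>_. L)) b"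
      using XA XB by (simp add: S2.emeasure_PiM S3.emeasure_PiM fin prod.distrib Pi_iff)
    also have "\<dots> = emeasure (PiM I (\<lambda>_. M) \<Otimes>\<^sub>M PiM I (\<lambda>_. L)) X"
    proof -
      have aS: "a \<in> sets (PiM I (\<lambda>_. M))" using X(2) EA(2) by (simp add: sigma_sets.Basic)
      have bS: "b \<in> sets (PiM I (\<lambda>_. L))" using X(3) EB(2) by (simp add: sigma_sets.Basic)
      show ?thesis unfolding X(1) using aS bS by (simp add: PL.emeasure_pair_measure_Times)
    qed
    finally show "emeasure (distr (PiM I (\<lambda>_. M \<Otimes>\<^sub>M L)) (PiM I (\<lambda>_. M) \<Otimes>\<^sub>M PiM I (\<lambda>_. L)) ?spl) X
        = emeasure (PiM I (\<lambda>_. M) \<Otimes>\<^sub>M PiM I (\<lambda>_. L)) X" .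
  qed
qed

lemma PiM_pmf_bridge:
  fixes p :: "'b pmf" and I :: "'i set"
  assumes fin: "finite I"
  shows "PiM I (\<lambda>_. measure_pmf p) =
         distr (measure_pmf (Pi_pmf I d (\<lambda>_. p))) (PiM I (\<lambda>_. measure_pmf p)) (\<lambda>f. restrict f I)"
proof -
  interpret S: product_sigma_finite "\<lambda>_::'i. measure_pmf p" by unfold_locales
  have meas: "(\<lambda>f. restrict f I) \<in> measurable (measure_pmf (Pi_pmf I d (\<lambda>_. p))) (PiM I (\<lambda>_. measure_pmf p))"
    by (simp add: space_PiM)
  show ?thesis
  proof (rule sym, rule S.PiM_eqI)
    show "finite I" by (fact fin)
    show "sets (distr (measure_pmf (Pi_pmf I d (\<lambda>_. p))) (PiM I (\<lambda>_. measure_pmf p)) (\<lambda>f. restrict f I))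
       = sets (PiM I (\<lambda>_. measure_pmf p))" by simp
  next
    fix A assume A: "\<And>i. i \<in> I \<Longrightarrow> A i \<in> sets (measure_pmf p)"
    let ?Q = "Pi_pmf I d (\<lambda>_. p)"
    have "emeasure (distr (measure_pmf ?Q) (PiM I (\<lambda>_. measure_pmf p)) (\<lambda>f. restrict f I)) (PiE I A)
        = emeasure (measure_pmf ?Q) ((\<lambda>f. restrict f I) -` PiE I A)"
      using A meas by (subst emeasure_distr) (auto intro: sets_PiM_I_finite fin)
    also have "\<dots> = emeasure (measure_pmf ?Q) (((\<lambda>f. restrict f I) -` PiE I A) \<inter> set_pmf ?Q)"
      by (rule emeasure_Int_set_pmf[symmetric])
    also have "((\<lambda>f. restrict f I) -` PiE I A) \<inter> set_pmf ?Q = PiE_dflt I d A \<inter> set_pmf ?Q"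
      using set_Pi_pmf_subset[OF fin, of d "\<lambda>_. p"]
      by (auto simp: PiE_dflt_def PiE_iff)
    also have "emeasure (measure_pmf ?Q) \<dots> = emeasure (measure_pmf ?Q) (PiE_dflt I d A)"
      by (rule emeasure_Int_set_pmf)
    also have "\<dots> = ennreal (\<Prod>i\<in>I. measure_pmf.prob p (A i))"
      by (simp add: measure_pmf.emeasure_eq_measure measure_Pi_pmf_PiE_dflt fin)
    also have "\<dots> = (\<Prod>i\<in>I. emeasure (measure_pmf p) (A i))"
      by (simp add: measure_pmf.emeasure_eq_measure prod_ennreal)
    finally show "emeasure (distr (measure_pmf ?Q) (PiM I (\<lambda>_. measure_pmf p)) (\<lambda>f. restrict f I)) (PiE I A)
        = (\<Prod>i\<in>I. emeasure (measure_pmf p) (A i))" .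
  qed
qed

lemma binom_integral:
  assumes k: "odd k" and a: "0 \<le> \<alpha>" "\<alpha> \<le> 1"
  shows "(\<integral>c. (if c \<le> k div 2 then 1 else -1::real) \<partial>measure_pmf (binomial_pmf k \<alpha>)) = -1 + 2 * phi k \<alpha>"
proof -
  have eq: "(\<lambda>c. (if c \<le> k div 2 then 1 else -1::real)) = (\<lambda>c. 2 * indicator {..k div 2} c - 1)"
    by (auto simp: indicator_def fun_eq_iff)
  have int: "integrable (measure_pmf (binomial_pmf k \<alpha>)) (indicator {..k div 2} :: nat \<Rightarrow> real)"
    using a by (intro integrable_measure_pmf_finite) auto
  show ?thesis unfolding eq phi_def
    using int by (simp add: Bochner_Integration.integral_diff)
qed

lemma label_integral:
  fixes A I :: "nat set"
  assumes fin: "finite I" and AI: "A \<subseteq> I" and cA: "card A = k" and k: "odd k"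
    and a: "0 \<le> \<alpha>" "\<alpha> \<le> 1"
  shows "(\<integral>ys. (if (\<Sum>i\<in>A. ys i) > 0 then 1 else -1::real) \<partial>PiM I (\<lambda>_. measure_pmf (label_pmf \<alpha>)))
         = -1 + 2 * phi k \<alpha>"
proof -
  let ?L = "label_pmf \<alpha>"
  let ?G = "\<lambda>ys::nat\<Rightarrow>real. (if (\<Sum>i\<in>A. ys i) > 0 then 1 else -1::real)"
  let ?h = "\<lambda>b::bool. if b then -1 else (1::real)"
  have finA: "finite A" using fin AI finite_subset by blast
  have Gm: "?G \<in> borel_measurable (PiM I (\<lambda>_. measure_pmf ?L))"
  proof -
    have "(\<lambda>ys. ys i) \<in> borel_measurable (PiM I (\<lambda>_. measure_pmf ?L))" if "i \<in> A" for i
    proof -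
      have m1: "(\<lambda>ys. ys i) \<in> measurable (PiM I (\<lambda>_. measure_pmf ?L)) (measure_pmf ?L)"
        using that AI by (intro measurable_component_singleton) auto
      have m2: "(\<lambda>y. y) \<in> measurable (measure_pmf ?L) (borel :: real measure)" by simp
      show ?thesis using measurable_compose[OF m1 m2] by simp
    qed
    then have "(\<lambda>ys. \<Sum>i\<in>A. ys i) \<in> borel_measurable (PiM I (\<lambda>_. measure_pmf ?L))"
      by (intro borel_measurable_sum) auto
    moreover have "(\<lambda>t::real. if t > 0 then 1 else -1::real) \<in> borel_measurable borel" by measurable
    ultimately show ?thesis using measurable_compose by blast
  qed
  have "(\<integral>ys. ?G ys \<partial>PiM I (\<lambda>_. measure_pmf ?L))
      = (\<integral>ys. ?G ys \<partial>distr (measure_pmf (Pi_pmf I 1 (\<lambda>_. ?L))) (PiM I (\<lambda>_. measure_pmf ?L)) (\<lambda>f. restrict f I))"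
    by (subst PiM_pmf_bridge[OF fin, of ?L 1]) (rule refl)
  also have "\<dots> = (\<integral>f. ?G (restrict f I) \<partial>measure_pmf (Pi_pmf I 1 (\<lambda>_. ?L)))"
    using Gm by (subst integral_distr) (auto simp: space_PiM)
  also have "\<dots> = (\<integral>f. ?G f \<partial>measure_pmf (Pi_pmf I 1 (\<lambda>_. ?L)))"
  proof -
    have "?G (restrict f I) = ?G f" for f
    proof -
      have "(\<Sum>i\<in>A. restrict f I i) = (\<Sum>i\<in>A. f i)" using AI by (intro sum.cong) auto
      then show ?thesis by simp
    qed
    then show ?thesis by simp
  qed
  also have "Pi_pmf I 1 (\<lambda>_. ?L) = map_pmf (\<lambda>g. ?h \<circ> g) (Pi_pmf I False (\<lambda>_. bernoulli_pmf \<alpha>))"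
    unfolding label_pmf_def by (rule Pi_pmf_map) (use fin in auto)
  also have "(\<integral>f. ?G f \<partial>measure_pmf \<dots>) = (\<integral>b. ?G (?h \<circ> b) \<partial>measure_pmf (Pi_pmf I False (\<lambda>_. bernoulli_pmf \<alpha>)))"
    by simp
  also have "\<dots> = (\<integral>b. (\<lambda>c. if c \<le> k div 2 then 1 else -1::real) (card {i\<in>A. b i}) \<partial>measure_pmf (Pi_pmf I False (\<lambda>_. bernoulli_pmf \<alpha>)))"
  proof -
    have "?G (?h \<circ> b) = (if card {i\<in>A. b i} \<le> k div 2 then 1 else -1)" for b
    proof -
      have "(\<Sum>i\<in>A. (?h \<circ> b) i) = (\<Sum>i\<in>A. 1 - 2 * (if b i then 1 else 0))"
        by (intro sum.cong) auto
      also have "\<dots> = real k - 2 * real (card {i\<in>A. b i})"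
      proof -
        have "A \<inter> Collect b = {i\<in>A. b i}" by auto
        then show ?thesis
          using finA cA by (simp add: sum_subtractf sum_distrib_left[symmetric] sum.If_cases)
      qed
      finally have s: "(\<Sum>i\<in>A. (?h \<circ> b) i) = real k - 2 * real (card {i\<in>A. b i})" .
      have "(real k - 2 * real (card {i\<in>A. b i}) > 0) = (card {i\<in>A. b i} \<le> k div 2)"
        using k by (auto elim!: oddE)
      then show ?thesis using s by simp
    qed
    then show ?thesis by simp
  qed
  also have "\<dots> = (\<integral>c. (if c \<le> k div 2 then 1 else -1::real)
        \<partial>measure_pmf (map_pmf (\<lambda>b. card {i\<in>A. b i}) (Pi_pmf I False (\<lambda>_. bernoulli_pmf \<alpha>))))"
    by simp
  also have "map_pmf (\<lambda>b. card {i\<in>A. b i}) (Pi_pmf I False (\<lambda>_. bernoulli_pmf \<alpha>))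
      = map_pmf (\<lambda>b. card {i\<in>A. b i}) (Pi_pmf A False (\<lambda>_. bernoulli_pmf \<alpha>))"
  proof -
    have "(\<lambda>x. card {i. (i \<in> A \<longrightarrow> x i) \<and> i \<in> A}) = (\<lambda>b. card {i\<in>A. b i})"
      by (intro ext arg_cong[where f=card]) auto
    then show ?thesis by (subst Pi_pmf_subset[OF fin AI]) (simp add: pmf.map_comp o_def)
  qed
  also have "\<dots> = binomial_pmf k \<alpha>"
    by (rule binomial_pmf_altdef'[symmetric]) (use finA cA a in auto)
  finally show ?thesis using binom_integral[OF k a] by simp
qed

lemma spl_measurable:
  fixes M :: "'a measure" and L :: "'b measure" and I :: "'i set"
  shows "(\<lambda>S. (\<lambda>i\<in>I. fst (S i), \<lambda>i\<in>I. snd (S i))) \<in> measurable (PiM I (\<lambda>_. M \<Otimes>\<^sub>M L)) (PiM I (\<lambda>_. M) \<Otimes>\<^sub>M PiM I (\<lambda>_. L))"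
proof -
  have m1: "(\<lambda>S. fst (S i)) \<in> measurable (PiM I (\<lambda>_. M \<Otimes>\<^sub>M L)) M" if "i \<in> I" for i
    using measurable_component_singleton[OF that, of "\<lambda>_. M \<Otimes>\<^sub>M L"]
    by (rule measurable_compose) simp
  have m2: "(\<lambda>S. snd (S i)) \<in> measurable (PiM I (\<lambda>_. M \<Otimes>\<^sub>M L)) L" if "i \<in> I" for i
    using measurable_component_singleton[OF that, of "\<lambda>_. M \<Otimes>\<^sub>M L"]
    by (rule measurable_compose) simp
  show ?thesis unfolding measurable_pair_iff
    by (auto simp: o_def intro!: measurable_restrict m1 m2)
qed

theorem proposition19:
  fixes M :: "'a::metric_space measure" and \<alpha> :: real and k n :: nat
    and N :: "(nat \<Rightarrow> 'a) \<Rightarrow> 'a \<Rightarrow> nat set" and x :: 'a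
  assumes "prob_space M"
    and "0 < \<alpha>" and "\<alpha> \<le> 1"
    and "odd k" and "k \<le> n"
    and "knn_selection n k N"
    and "(\<lambda>S. knn_classifier N S x)
           \<in> borel_measurable (PiM {..<n} (\<lambda>_. M \<Otimes>\<^sub>M measure_pmf (label_pmf \<alpha>)))"
  shows "(\<integral>S. knn_classifier N S x \<partial>(PiM {..<n} (\<lambda>_. M \<Otimes>\<^sub>M measure_pmf (label_pmf \<alpha>))))
           = -1 + 2 * phi k \<alpha>"
proof -
  let ?L = "measure_pmf (label_pmf \<alpha>)"
  let ?D = "M \<Otimes>\<^sub>M ?L"
  let ?I = "{..<n}"
  let ?\<Omega> = "PiM ?I (\<lambda>_. ?D)"
  let ?PM = "PiM ?I (\<lambda>_. M)"
  let ?PL = "PiM ?I (\<lambda>_. ?L)"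
  let ?f = "\<lambda>S. knn_classifier N S x"
  let ?spl = "\<lambda>S. (\<lambda>i\<in>?I. fst (S i), \<lambda>i\<in>?I. snd (S i))"
  let ?comb = "\<lambda>z. \<lambda>i\<in>?I. (fst z i, snd z i)"
  interpret pM: prob_space M by fact
  interpret PM: prob_space ?PM using pM.prob_space_axioms by (intro prob_space_PiM)
  interpret PL: prob_space ?PL by (intro prob_space_PiM) (rule prob_space_measure_pmf)
  interpret P2: pair_sigma_finite ?PM ?PL by unfold_locales
  interpret P2p: prob_space "?PM \<Otimes>\<^sub>M ?PL"
    using PM.prob_space_axioms PL.prob_space_axioms by (rule prob_space_pair)
  have fm: "?f \<in> borel_measurable ?\<Omega>" by (fact assms(7))
  have comb_m: "?comb \<in> measurable (?PM \<Otimes>\<^sub>M ?PL) ?\<Omega>"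
  proof -
    have "(\<lambda>z. (fst z i, snd z i)) \<in> measurable (?PM \<Otimes>\<^sub>M ?PL) ?D" if "i \<in> ?I" for i
    proof -
      have a: "(\<lambda>z. fst z i) \<in> measurable (?PM \<Otimes>\<^sub>M ?PL) M"
        using measurable_compose[OF measurable_fst[of ?PM ?PL] measurable_component_singleton[OF that, of "\<lambda>_. M"]] by simp
      have b: "(\<lambda>z. snd z i) \<in> measurable (?PM \<Otimes>\<^sub>M ?PL) ?L"
        using measurable_compose[OF measurable_snd[of ?PM ?PL] measurable_component_singleton[OF that, of "\<lambda>_. ?L"]] by simp
      show ?thesis using a b by (rule measurable_Pair)
    qed
    then show ?thesis by (intro measurable_restrict) auto
  qed
  have fc_m: "(\<lambda>z. ?f (?comb z)) \<in> borel_measurable (?PM \<Otimes>\<^sub>M ?PL)"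
    using measurable_compose[OF comb_m fm] .
  have bound: "norm (?f S) \<le> 1" for S by (simp add: knn_classifier_def)
  have "integral\<^sup>L ?\<Omega> ?f = (\<integral>S. ?f (?comb (?spl S)) \<partial>?\<Omega>)"
  proof (rule Bochner_Integration.integral_cong[OF refl])
    fix S assume "S \<in> space ?\<Omega>"
    then have "?comb (?spl S) = S" by (auto simp: space_PiM PiE_iff extensional_def fun_eq_iff)
    then show "?f S = ?f (?comb (?spl S))" by simp
  qed
  also have "\<dots> = (\<integral>z. ?f (?comb z) \<partial>distr ?\<Omega> (?PM \<Otimes>\<^sub>M ?PL) ?spl)"
    by (rule integral_distr[symmetric]) (rule spl_measurable, rule fc_m)
  also have "distr ?\<Omega> (?PM \<Otimes>\<^sub>M ?PL) ?spl = ?PM \<Otimes>\<^sub>M ?PL"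
    by (rule PiM_pair_split) (auto intro: assms(1) prob_space_measure_pmf)
  also have "(\<integral>z. ?f (?comb z) \<partial>(?PM \<Otimes>\<^sub>M ?PL)) = (\<integral>xs. (\<integral>ys. ?f (?comb (xs, ys)) \<partial>?PL) \<partial>?PM)"
  proof (rule P2.integral_fst'[symmetric])
    show "integrable (?PM \<Otimes>\<^sub>M ?PL) (\<lambda>z. ?f (?comb z))"
      by (rule P2p.integrable_const_bound[where B=1]) (use bound fc_m in auto)
  qed
  also have "\<dots> = (\<integral>xs. (-1 + 2 * phi k \<alpha>) \<partial>?PM)"
  proof (rule Bochner_Integration.integral_cong[OF refl])
    fix xs :: "nat \<Rightarrow> 'a"
    define F :: "nat \<Rightarrow> 'a" where "F = (\<lambda>i. fst (?comb (xs, undefined :: nat \<Rightarrow> real) i))"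
    define A where "A = N F x"
    have F: "(\<lambda>i. fst (?comb (xs, ys) i)) = F" for ys :: "nat \<Rightarrow> real" by (auto simp: F_def fun_eq_iff)
    have AI: "A \<subseteq> ?I" and cA: "card A = k" using assms(6) by (auto simp: knn_selection_def A_def)
    have eq: "?f (?comb (xs, ys)) = (if (\<Sum>i\<in>A. ys i) > 0 then 1 else -1)" for ys
    proof -
      have "(\<Sum>i\<in>A. snd (?comb (xs,ys) i)) = (\<Sum>i\<in>A. ys i)" using AI by (intro sum.cong) auto
      then show ?thesis unfolding knn_classifier_def F A_def[symmetric] by simp
    qed
    show "(\<integral>ys. ?f (?comb (xs, ys)) \<partial>?PL) = -1 + 2 * phi k \<alpha>"
      unfolding eq using label_integral[OF _ AI cA assms(4)] assms(2,3) by simp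
  qed
  also have "\<dots> = -1 + 2 * phi k \<alpha>" by (simp add: PM.prob_space)
  finally show ?thesis .
qed


end
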